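(* Let $\mathcal{F}\subseteq[\omega]^{<\omega}$ be a compact hereditary family covering $\omega$ which is large. Then the unit vector sequence $(e_n)$ is weakly null in $X^{\mathcal{F}}$ (i.e. $f(e_n)\to0$ for every continuous linear functional $f$ on $X^\mathcal{F}$) but $\lVert e_n\rVert^{\mathcal{F}}=1$ for all $n$. Hence $X^{\mathcal{F}}$ does not have the Schur property. In particular $X^{\mathcal{S}}$ does not have the Schur property.
   Context: $\omega=\{1,2,3,\dots\}$; $[\omega]^{<\omega}$ and $[M]^n$ denote the finite subsets of $\omega$ and the $n$-element subsets of $M$. Subsets of $\omega$ are identified with elements of $2^\omega$; compact means compact in $2^\omega$; hereditary means closed under subsets. A family $\mathcal{F}$ is large if $\mathcal{F}\cap[M]^n\neq\emptyset$ for every infinite $M\subseteq\omega$ and every $n\in\omega$. A partition is a family $\mathcal{P}\subseteq\mathcal{P}(\omega)$ with $\emptyset\in\mathcal{P}$, $\bigcup\mathcal{P}=\omega$, elements pairwise disjoint; $\mathbb{P}_\mathcal{F}$ is the set of partitions contained in $\mathcal{F}$. $\lVert x\rVert^{\mathcal{F}}=\inf_{\mathcal{P}\in\mathbb{P}_\mathcal{F}}\sum_{F\in\mathcal{P}}\sup_{k\in F}|x(k)|$; $X^\mathcal{F}$ is the completion of $c_{00}$ under this quasi-norm. A (quasi-)Banach space has the Schur property if every weakly null sequence converges to $0$ in (quasi-)norm. $\mathcal{S}=\{A\subseteq\omega:|A|\le\min A\}$ is the Schreier family. *)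

theory Defs
  imports "HOL-Analysis.Analysis"
begin

definition omega :: "nat set" where "omega = {1..}"

text \<open>Subsets of omega identified with elements of 2^omega (characteristic functions,
  with product topology on nat => bool).\<close>
definition compact_family :: "nat set set \<Rightarrow> bool" where
  "compact_family F \<longleftrightarrow> compact ((\<lambda>A k. k \<in> A) ` F)"

definition hereditary :: "nat set set \<Rightarrow> bool" where
  "hereditary F \<longleftrightarrow> (\<forall>A\<in>F. \<forall>B. B \<subseteq> A \<longrightarrow> B \<in> F)"

definition large :: "nat set set \<Rightarrow> bool" where
  "large F \<longleftrightarrow> (\<forall>M. M \<subseteq> omega \<longrightarrow> infinite M \<longrightarrow>
      (\<forall>n\<in>omega. \<exists>A\<in>F. A \<subseteq> M \<and> card A = n))"

definition is_partition :: "nat set set \<Rightarrow> bool" where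
  "is_partition P \<longleftrightarrow> {} \<in> P \<and> \<Union>P = omega \<and>
     (\<forall>A\<in>P. \<forall>B\<in>P. A \<noteq> B \<longrightarrow> A \<inter> B = {})"

definition partitions_in :: "nat set set \<Rightarrow> nat set set set" where
  "partitions_in F = {P. is_partition P \<and> P \<subseteq> F}"

definition supabs :: "(nat \<Rightarrow> real) \<Rightarrow> nat set \<Rightarrow> real" where
  "supabs x A = (if A = {} then 0 else (SUP k\<in>A. \<bar>x k\<bar>))"

definition Fnorm :: "nat set set \<Rightarrow> (nat \<Rightarrow> real) \<Rightarrow> real" where
  "Fnorm F x = (INF P\<in>partitions_in F. (\<Sum>\<^sub>\<infinity>A\<in>P. supabs x A))"

text \<open>c_00: finitely supported real sequences indexed by omega.\<close>
definition c00 :: "(nat \<Rightarrow> real) set" where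
  "c00 = {x. finite {k. x k \<noteq> 0} \<and> x 0 = 0}"

definition unit_vec :: "nat \<Rightarrow> nat \<Rightarrow> real" where
  "unit_vec n = (\<lambda>k. if k = n then 1 else 0)"

text \<open>Continuous linear functionals on X^F, via their (injective) restriction to the
  dense subspace c_00: linear maps on c_00 bounded w.r.t. the quasi-norm.\<close>
definition cont_functional :: "nat set set \<Rightarrow> ((nat \<Rightarrow> real) \<Rightarrow> real) \<Rightarrow> bool" where
  "cont_functional F f \<longleftrightarrow>
     (\<forall>x\<in>c00. \<forall>y\<in>c00. \<forall>a b. f (\<lambda>k. a * x k + b * y k) = a * f x + b * f y) \<and>
     (\<exists>C. \<forall>x\<in>c00. \<bar>f x\<bar> \<le> C * Fnorm F x)"

definition weakly_null :: "nat set set \<Rightarrow> (nat \<Rightarrow> nat \<Rightarrow> real) \<Rightarrow> bool" where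
  "weakly_null F u \<longleftrightarrow> (\<forall>f. cont_functional F f \<longrightarrow> (\<lambda>n. f (u n)) \<longlonglongrightarrow> 0)"

definition schreier :: "nat set set" where
  "schreier = {A. A \<subseteq> omega \<and> finite A \<and> (A \<noteq> {} \<longrightarrow> card A \<le> Min A)}"

end

theory Submission
  imports Defs
begin

definition ind :: "nat set \<Rightarrow> nat \<Rightarrow> real" where
  "ind A = (\<lambda>k. if k \<in> A then 1 else 0)"

lemma omega_iff: "k \<in> omega \<longleftrightarrow> k \<ge> 1"
  by (simp add: omega_def)

lemma supabs_01:
  assumes "\<forall>k. x k = 0 \<or> x k = 1"
  shows "supabs x A = (if \<exists>k\<in>A. x k = 1 then 1 else 0)"
proof (cases "A = {}")
  case True then show ?thesis by (simp add: supabs_def)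
next
  case ne: False
  show ?thesis
  proof (cases "\<exists>k\<in>A. x k = 1")
    case True
    then obtain k0 where k0: "k0 \<in> A" "x k0 = 1" by blast
    have "(SUP k\<in>A. \<bar>x k\<bar>) = 1"
    proof (rule cSup_eq_maximum)
      show "1 \<in> (\<lambda>k. \<bar>x k\<bar>) ` A" using k0 by force
      show "y \<le> 1" if "y \<in> (\<lambda>k. \<bar>x k\<bar>) ` A" for y
      proof -
        from that obtain k where "y = \<bar>x k\<bar>" by blast
        moreover have "x k = 0 \<or> x k = 1" using assms by blast
        ultimately show ?thesis by auto
      qed
    qed
    then show ?thesis using ne True by (simp add: supabs_def)
  next
    case False
    have "(SUP k\<in>A. \<bar>x k\<bar>) = (SUP k\<in>A. (0::real))"
    proof (rule SUP_cong)
      fix k assume "k \<in> A"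
      then have "x k \<noteq> 1" using False by blast
      then have "x k = 0" using assms by blast
      then show "\<bar>x k\<bar> = 0" by simp
    qed simp
    also have "\<dots> = 0" using ne by simp
    finally show ?thesis using ne False by (simp add: supabs_def)
  qed
qed

lemma supabs_ind: "supabs (ind A) B = (if B \<inter> A \<noteq> {} then 1 else 0)"
proof -
  have x01: "\<forall>k. ind A k = 0 \<or> ind A k = 1" by (simp add: ind_def)
  show ?thesis unfolding supabs_01[OF x01] by (auto simp: ind_def)
qed

lemma supabs_unit: "supabs (unit_vec n) B = (if n \<in> B then 1 else 0)"
proof -
  have x01: "\<forall>k. unit_vec n k = 0 \<or> unit_vec n k = 1" by (simp add: unit_vec_def)
  show ?thesis unfolding supabs_01[OF x01] by (auto simp: unit_vec_def)
qed

lemma infsum_single: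
  fixes g :: "nat set \<Rightarrow> real"
  assumes "a \<in> P" "\<forall>B\<in>P. B \<noteq> a \<longrightarrow> g B = 0"
  shows "infsum g P = g a"
proof -
  have "infsum g P = infsum g {a}"
    by (rule infsum_cong_neutral) (use assms in auto)
  then show ?thesis by simp
qed

definition PA :: "nat set \<Rightarrow> nat set set" where
  "PA A = insert {} (insert A ((\<lambda>k. {k}) ` (omega - A)))"

lemma PA_in:
  assumes F0: "{} \<in> F" and F1: "\<forall>k\<in>omega. {k} \<in> F" and A: "A \<in> F" "A \<subseteq> omega"
  shows "PA A \<in> partitions_in F"
proof -
  have "\<Union>(PA A) = omega" using A(2) unfolding PA_def by blast
  moreover have "\<forall>X\<in>PA A. \<forall>Y\<in>PA A. X \<noteq> Y \<longrightarrow> X \<inter> Y = {}"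
    unfolding PA_def by blast
  moreover have "PA A \<subseteq> F" unfolding PA_def using F0 F1 A(1) by blast
  moreover have "{} \<in> PA A" unfolding PA_def by blast
  ultimately show ?thesis unfolding partitions_in_def is_partition_def by blast
qed

lemma partitions_ne:
  assumes F0: "{} \<in> F" and F1: "\<forall>k\<in>omega. {k} \<in> F"
  shows "partitions_in F \<noteq> {}"
  using PA_in[OF F0 F1 F0] by auto

lemma Fnorm_ind:
  assumes F0: "{} \<in> F" and F1: "\<forall>k\<in>omega. {k} \<in> F" and A: "A \<in> F" "A \<subseteq> omega" "A \<noteq> {}"
  shows "0 \<le> Fnorm F (ind A) \<and> Fnorm F (ind A) \<le> 1"
proof -
  have x01: "\<forall>k. ind A k = 0 \<or> ind A k = 1" by (simp add: ind_def)
  have nn: "0 \<le> (\<Sum>\<^sub>\<infinity>B\<in>P. supabs (ind A) B)" for P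
    by (rule infsum_nonneg) (simp add: supabs_01[OF x01])
  have bdd: "bdd_below ((\<lambda>P. \<Sum>\<^sub>\<infinity>B\<in>P. supabs (ind A) B) ` partitions_in F)"
    using nn by (intro bdd_belowI[where m=0]) auto
  have "(\<Sum>\<^sub>\<infinity>B\<in>PA A. supabs (ind A) B) = supabs (ind A) A"
  proof (rule infsum_single)
    show "A \<in> PA A" by (simp add: PA_def)
    show "\<forall>B\<in>PA A. B \<noteq> A \<longrightarrow> supabs (ind A) B = 0"
      by (auto simp: PA_def supabs_ind)
  qed
  also have "\<dots> = 1" using A(3) by (auto simp: supabs_ind)
  finally have v: "(\<Sum>\<^sub>\<infinity>B\<in>PA A. supabs (ind A) B) = 1" .
  have "Fnorm F (ind A) \<le> 1"
    unfolding Fnorm_def using cINF_lower[OF bdd PA_in[OF F0 F1 A(1,2)]] v by simp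
  moreover have "0 \<le> Fnorm F (ind A)"
    unfolding Fnorm_def using partitions_ne[OF F0 F1] nn by (intro cINF_greatest) auto
  ultimately show ?thesis by simp
qed

lemma Fnorm_unit:
  assumes F0: "{} \<in> F" and F1: "\<forall>k\<in>omega. {k} \<in> F" and n: "n \<in> omega"
  shows "Fnorm F (unit_vec n) = 1"
proof -
  have x01: "\<forall>k. unit_vec n k = 0 \<or> unit_vec n k = 1" by (simp add: unit_vec_def)
  have one: "(\<Sum>\<^sub>\<infinity>B\<in>P. supabs (unit_vec n) B) = 1" if P: "P \<in> partitions_in F" for P
  proof -
    from P have part: "is_partition P" by (simp add: partitions_in_def)
    then obtain A0 where A0: "A0 \<in> P" "n \<in> A0" using n unfolding is_partition_def by blast
    have "(\<Sum>\<^sub>\<infinity>B\<in>P. supabs (unit_vec n) B) = supabs (unit_vec n) A0"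
    proof (rule infsum_single)
      show "A0 \<in> P" by fact
      show "\<forall>B\<in>P. B \<noteq> A0 \<longrightarrow> supabs (unit_vec n) B = 0"
      proof (intro ballI impI)
        fix B assume "B \<in> P" "B \<noteq> A0"
        then have "n \<notin> B" using part A0 unfolding is_partition_def by blast
        then show "supabs (unit_vec n) B = 0" by (auto simp: supabs_unit)
      qed
    qed
    also have "\<dots> = 1" using A0 by (auto simp: supabs_unit)
    finally show ?thesis .
  qed
  have "Fnorm F (unit_vec n) = (INF P\<in>partitions_in F. (1::real))"
    unfolding Fnorm_def using one by (intro INF_cong) auto
  also have "\<dots> = 1" using partitions_ne[OF F0 F1] by simp
  finally show ?thesis .
qed

lemma ind_c00: "finite A \<Longrightarrow> A \<subseteq> omega \<Longrightarrow> ind A \<in> c00"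
  by (auto simp: c00_def ind_def omega_iff)

lemma unit_c00: "a \<in> omega \<Longrightarrow> unit_vec a \<in> c00"
  by (auto simp: c00_def unit_vec_def omega_iff)

lemma lin_sum:
  assumes lin: "\<forall>x\<in>c00. \<forall>y\<in>c00. \<forall>a b. f (\<lambda>k. a * x k + b * y k) = a * f x + b * f y"
    and "finite A" "A \<subseteq> omega"
  shows "f (ind A) = (\<Sum>k\<in>A. f (unit_vec k))"
  using assms(2,3)
proof (induction A rule: finite_induct)
  case empty
  have z: "(\<lambda>k::nat. 0::real) \<in> c00" by (simp add: c00_def)
  have "f (\<lambda>k. 0 * 0 + 0 * 0) = 0 * f (\<lambda>k. 0) + 0 * f (\<lambda>k. 0)"
    using lin[rule_format, OF z z, of 0 0] by simp
  then show ?case by (simp add: ind_def)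
next
  case (insert a A)
  have e: "ind (insert a A) = (\<lambda>k. 1 * ind A k + 1 * unit_vec a k)"
    using insert(2) by (auto simp: ind_def unit_vec_def)
  have "f (ind (insert a A)) = 1 * f (ind A) + 1 * f (unit_vec a)"
    unfolding e using lin ind_c00[of A] unit_c00[of a] insert by blast
  then show ?case using insert by simp
qed

lemma bad:
  assumes cf: "cont_functional F f" and F0: "{} \<in> F" and F1: "\<forall>k\<in>omega. {k} \<in> F"
    and lg: "large F" and r: "r > 0"
    and inf: "infinite {n. f (unit_vec (Suc n)) \<ge> r}"
  shows False
proof -
  let ?S = "{n. f (unit_vec (Suc n)) \<ge> r}"
  obtain C where C: "\<forall>x\<in>c00. \<bar>f x\<bar> \<le> C * Fnorm F x"
    using cf unfolding cont_functional_def by blast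
  have lin: "\<forall>x\<in>c00. \<forall>y\<in>c00. \<forall>a b. f (\<lambda>k. a * x k + b * y k) = a * f x + b * f y"
    using cf unfolding cont_functional_def by blast
  have Mo: "Suc ` ?S \<subseteq> omega" by (auto simp: omega_iff)
  have Mi: "infinite (Suc ` ?S)" using inf by (simp add: finite_image_iff)
  obtain n where n: "\<bar>C\<bar> < real n * r" using ex_less_of_nat_mult[OF r] by blast
  have n2: "\<bar>C\<bar> < real (Suc n) * r" using n r by (simp add: distrib_right)
  obtain A where A: "A \<in> F" "A \<subseteq> Suc ` ?S" "card A = Suc n"
  proof -
    have "Suc n \<in> omega" by (simp add: omega_iff)
    then show ?thesis using that lg Mo Mi unfolding large_def by blast
  qed
  have fin: "finite A" using A(3) card_ge_0_finite[of A] by simp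
  have Ao: "A \<subseteq> omega" using A(2) Mo by blast
  have Ane: "A \<noteq> {}" using A(3) by auto
  have "f (ind A) = (\<Sum>k\<in>A. f (unit_vec k))" using lin_sum[OF lin fin Ao] .
  also have "\<dots> \<ge> real (card A) * r"
    by (rule sum_bounded_below) (use A(2) in auto)
  finally have lo: "f (ind A) \<ge> real (Suc n) * r" using A(3) by simp
  have fn: "0 \<le> Fnorm F (ind A) \<and> Fnorm F (ind A) \<le> 1"
    using Fnorm_ind[OF F0 F1 A(1) Ao Ane] .
  have "\<bar>f (ind A)\<bar> \<le> C * Fnorm F (ind A)" using C ind_c00[OF fin Ao] by blast
  also have "\<dots> \<le> \<bar>C\<bar> * Fnorm F (ind A)" using fn by (intro mult_right_mono) auto
  also have "\<dots> \<le> \<bar>C\<bar>" using fn by (intro mult_left_le) auto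
  finally show False using lo n2 by linarith
qed

lemma wnull:
  assumes F0: "{} \<in> F" and F1: "\<forall>k\<in>omega. {k} \<in> F" and lg: "large F"
  shows "weakly_null F (\<lambda>n. unit_vec (Suc n))"
  unfolding weakly_null_def
proof (intro allI impI)
  fix f assume cf: "cont_functional F f"
  have cf2: "cont_functional F (\<lambda>x. - f x)"
    using cf unfolding cont_functional_def by (auto simp: algebra_simps)
  show "(\<lambda>n. f (unit_vec (Suc n))) \<longlonglongrightarrow> 0"
  proof (rule ccontr)
    assume "\<not> ?thesis"
    then obtain r where r: "r > 0" and fr: "\<forall>no. \<exists>n\<ge>no. \<bar>f (unit_vec (Suc n))\<bar> \<ge> r"
      unfolding LIMSEQ_iff by (auto simp: not_less)
    have "infinite {n. \<bar>f (unit_vec (Suc n))\<bar> \<ge> r}"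
      using fr by (simp add: infinite_nat_iff_unbounded_le)
    moreover have "{n. \<bar>f (unit_vec (Suc n))\<bar> \<ge> r} =
       {n. f (unit_vec (Suc n)) \<ge> r} \<union> {n. - f (unit_vec (Suc n)) \<ge> r}" by auto
    ultimately have "infinite {n. f (unit_vec (Suc n)) \<ge> r} \<or> infinite {n. - f (unit_vec (Suc n)) \<ge> r}"
      by auto
    then show False
      using bad[OF cf F0 F1 lg r] bad[OF cf2 F0 F1 lg r] by blast
  qed
qed

lemma schreier_large: "large schreier"
  unfolding large_def
proof (intro allI impI ballI)
  fix M :: "nat set" and n assume M: "M \<subseteq> omega" "infinite M" and n: "n \<in> omega"
  have "infinite (M \<inter> {n..})"
  proof
    assume "finite (M \<inter> {n..})"
    moreover have "M \<subseteq> (M \<inter> {n..}) \<union> {..<n}" by auto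
    ultimately show False using M(2) finite_subset by blast
  qed
  then obtain B where B: "B \<subseteq> M \<inter> {n..}" "finite B" "card B = n"
    using infinite_arbitrarily_large by blast
  have "B \<noteq> {}" using B n by (auto simp: omega_iff)
  then have "n \<le> Min B" using B by auto
  then have "B \<in> schreier" using B M(1) by (auto simp: schreier_def)
  then show "\<exists>A\<in>schreier. A \<subseteq> M \<and> card A = n" using B by blast
qed

theorem mainTheorem14:
  shows "(\<forall>F. F \<subseteq> {A. A \<subseteq> omega \<and> finite A} \<longrightarrow> compact_family F \<longrightarrow> hereditary F
            \<longrightarrow> \<Union>F = omega \<longrightarrow> large F \<longrightarrow>
            weakly_null F (\<lambda>n. unit_vec (Suc n)) \<and> (\<forall>n\<in>omega. Fnorm F (unit_vec n) = 1))
       \<and> (weakly_null schreier (\<lambda>n. unit_vec (Suc n)) \<and> (\<forall>n\<in>omega. Fnorm schreier (unit_vec n) = 1))"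
proof (intro conjI allI impI)
  fix F :: "nat set set"
  assume h: "hereditary F" and U: "\<Union>F = omega" and lg: "large F"
  have "1 \<in> \<Union>F" using U by (simp add: omega_iff)
  then obtain A where "A \<in> F" by blast
  then have F0: "{} \<in> F" using h unfolding hereditary_def by blast
  have F1: "\<forall>k\<in>omega. {k} \<in> F"
  proof
    fix k assume "k \<in> omega"
    then obtain B where "B \<in> F" "k \<in> B" using U by blast
    then show "{k} \<in> F" using h unfolding hereditary_def by blast
  qed
  show "weakly_null F (\<lambda>n. unit_vec (Suc n))" using wnull[OF F0 F1 lg] .
  show "\<forall>n\<in>omega. Fnorm F (unit_vec n) = 1" using Fnorm_unit[OF F0 F1] by blast
next
  have F0: "{} \<in> schreier" by (simp add: schreier_def)
  have F1: "\<forall>k\<in>omega. {k} \<in> schreier" by (simp add: schreier_def omega_iff)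
  show "weakly_null schreier (\<lambda>n. unit_vec (Suc n))" using wnull[OF F0 F1 schreier_large] .
  show "\<forall>n\<in>omega. Fnorm schreier (unit_vec n) = 1" using Fnorm_unit[OF F0 F1] by blast
qed

end
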